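(* Let $n_1,n_2\ge 1$ be integers, $n=n_1+n_2>3$, and consider a uniformly random arrangement of $n_1$ symbols $x$ and $n_2$ symbols $y$ (all $\binom{n}{n_1}$ arrangements equally likely). Let $R_1$ and $R_2$ be the numbers of runs of $x$'s and of $y$'s, respectively, and $R_M=\max(R_1,R_2)$. Then (i) $\mathrm{Var}(R_M\mid R_1>R_2)=\dfrac{n_2(n_2-1)(n_1-2)(n_1-1)}{(n-2)^2(n-3)}$; (ii) $\mathrm{Var}(R_M\mid R_1<R_2)=\dfrac{n_1(n_1-1)(n_2-2)(n_2-1)}{(n-2)^2(n-3)}$; (iii) $\mathrm{Var}(R_M\mid R_1=R_2)=\dfrac{(n_2-1)^2(n_1-1)^2}{(n-2)^2(n-3)}$.
   Context: A run is a maximal block of consecutive identical symbols in the arrangement. Conditional variances given an event are considered when that event has positive probability. *)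

theory Defs
  imports "HOL-Probability.Probability"
begin

datatype sym = X | Y

definition arrangements :: "nat \<Rightarrow> nat \<Rightarrow> sym list set" where
  "arrangements n1 n2 = {w. length w = n1 + n2 \<and> count_list w X = n1}"

definition arr_pmf :: "nat \<Rightarrow> nat \<Rightarrow> sym list pmf" where
  "arr_pmf n1 n2 = pmf_of_set (arrangements n1 n2)"

definition runs :: "sym \<Rightarrow> sym list \<Rightarrow> nat" where
  "runs a w = length (filter (\<lambda>s. s = a) (remdups_adj w))"

definition R1 :: "sym list \<Rightarrow> nat" where "R1 w = runs X w"
definition R2 :: "sym list \<Rightarrow> nat" where "R2 w = runs Y w"
definition RM :: "sym list \<Rightarrow> nat" where "RM w = max (R1 w) (R2 w)"

definition cond_var :: "'a pmf \<Rightarrow> 'a set \<Rightarrow> ('a \<Rightarrow> real) \<Rightarrow> real" where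
  "cond_var p E f = measure_pmf.variance (cond_pmf p E) f"

end

theory Submission imports Defs begin


lemma MV_exact:
  "(\<Sum>i\<le>q. (q choose i) * (p choose (i + s))) = (p + q) choose (q + s)"
proof -
  have "(\<Sum>i\<le>q. (q choose i) * (p choose (i + s))) = (\<Sum>i\<le>q. (q choose (q - i)) * (p choose (i + s)))"
    by (rule sum.cong) (auto intro: binomial_symmetric)
  also have "\<dots> = (\<Sum>k\<le>q. (q choose k) * (p choose (q - k + s)))"
    unfolding atMost_atLeast0
    by (subst sum.atLeastAtMost_rev) (rule sum.cong, auto)
  also have "\<dots> = (\<Sum>k\<le>q. (q choose k) * (p choose (q + s - k)))"
    by (rule sum.cong) auto
  also have "\<dots> = (\<Sum>k\<le>q + s. (q choose k) * (p choose (q + s - k)))"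
    by (rule sum.mono_neutral_left) auto
  also have "\<dots> = (q + p) choose (q + s)" by (rule vandermonde)
  finally show ?thesis by (simp add: add.commute)
qed

lemma MV:
  assumes "q \<le> K"
  shows "(\<Sum>i\<le>K. (q choose i) * (p choose (i + s))) = (p + q) choose (q + s)"
proof -
  have "(\<Sum>i\<le>K. (q choose i) * (p choose (i + s))) = (\<Sum>i\<le>q. (q choose i) * (p choose (i + s)))"
    using assms by (intro sum.mono_neutral_right) auto
  then show ?thesis using MV_exact by simp
qed

lemma MV1:
  assumes "q \<le> K"
  shows "(\<Sum>i\<le>K. i * (q choose i) * (p choose (i + s))) = q * ((p + q - 1) choose (q + s))"
proof (cases q)
  case 0
  have "(\<Sum>i\<le>K. i * (q choose i) * (p choose (i + s))) = 0"
    using 0 by (intro sum.neutral) auto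
  then show ?thesis using 0 by simp
next
  case (Suc q')
  then obtain K' where K: "K = Suc K'" using assms by (cases K) auto
  have "(\<Sum>i\<le>K. i * (q choose i) * (p choose (i + s)))
      = (\<Sum>i\<le>K'. Suc i * (Suc q' choose Suc i) * (p choose (i + Suc s)))"
    unfolding K Suc by (subst sum.atMost_Suc_shift) (simp only: add_Suc_right add_Suc mult_zero_left add_0)
  also have "\<dots> = (\<Sum>i\<le>K'. Suc q' * ((q' choose i) * (p choose (i + Suc s))))"
  proof (rule sum.cong[OF refl])
    fix i
    have e: "Suc i * (Suc q' choose Suc i) = Suc q' * (q' choose i)"
      using Suc_times_binomial_eq[of q' i] by (simp only: mult.commute)
    show "Suc i * (Suc q' choose Suc i) * (p choose (i + Suc s)) = Suc q' * ((q' choose i) * (p choose (i + Suc s)))"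
      by (simp only: e mult.assoc)
  qed
  also have "\<dots> = Suc q' * ((p + q') choose (q' + Suc s))"
  proof -
    have qk: "q' \<le> K'" using assms K Suc by simp
    show ?thesis by (simp only: sum_distrib_left[symmetric] MV[OF qk])
  qed
  finally show ?thesis using Suc by simp
qed

lemma MV2:
  assumes "q \<le> K"
  shows "(\<Sum>i\<le>K. i * (i - 1) * (q choose i) * (p choose (i + s))) = q * (q - 1) * ((p + q - 2) choose (q + s))"
proof (cases q)
  case 0
  have "(\<Sum>i\<le>K. i * (i - 1) * (q choose i) * (p choose (i + s))) = 0"
    using 0 by (intro sum.neutral) auto
  then show ?thesis using 0 by simp
next
  case (Suc q')
  then obtain K' where K: "K = Suc K'" using assms by (cases K) auto
  have "(\<Sum>i\<le>K. i * (i - 1) * (q choose i) * (p choose (i + s)))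
      = (\<Sum>i\<le>K'. i * (Suc i * (Suc q' choose Suc i)) * (p choose (i + Suc s)))"
    unfolding K Suc
    by (subst sum.atMost_Suc_shift) (simp only: diff_Suc_1 add_Suc_right add_Suc mult_zero_left add_0 mult_ac)
  also have "\<dots> = (\<Sum>i\<le>K'. Suc q' * (i * (q' choose i) * (p choose (i + Suc s))))"
  proof (rule sum.cong[OF refl])
    fix i
    have e: "Suc i * (Suc q' choose Suc i) = Suc q' * (q' choose i)"
      using Suc_times_binomial_eq[of q' i] by (simp only: mult.commute)
    show "i * (Suc i * (Suc q' choose Suc i)) * (p choose (i + Suc s)) = Suc q' * (i * (q' choose i) * (p choose (i + Suc s)))"
      by (simp only: e mult_ac)
  qed
  also have "\<dots> = Suc q' * (q' * ((p + q' - 1) choose (q' + Suc s)))"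
  proof -
    have qk: "q' \<le> K'" using assms K Suc by simp
    show ?thesis by (simp only: sum_distrib_left[symmetric] MV1[OF qk])
  qed
  finally show ?thesis using Suc by (simp add: algebra_simps)
qed



lemma sym_neq[simp]: "(s \<noteq> X) = (s = Y)" "(s \<noteq> Y) = (s = X)"
  by (cases s; simp)+

lemma runs_Nil[simp]: "runs a [] = 0" by (simp add: runs_def)
lemma runs_single[simp]: "runs a [x] = (if x = a then 1 else 0)" by (simp add: runs_def)
lemma runs_Cons_Cons: "runs a (x # y # w) = runs a (y # w) + (if x = a \<and> y \<noteq> a then 1 else 0)"
  by (cases "x = y") (auto simp: runs_def)
lemma runs_rev[simp]: "runs a (rev w) = runs a w"
  by (simp add: runs_def rev_filter[symmetric])
lemma runs_snoc: "runs a (v @ [y]) = runs a v + (if y = a \<and> (v = [] \<or> last v \<noteq> a) then 1 else 0)"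
proof -
  have "runs a (v @ [y]) = runs a (rev (v @ [y]))" by (rule runs_rev[symmetric])
  also have "\<dots> = runs a (y # rev v)" by (simp del: runs_rev)
  also have "\<dots> = runs a v + (if y = a \<and> (v = [] \<or> last v \<noteq> a) then 1 else 0)"
  proof (cases "rev v")
    case Nil then show ?thesis by simp
  next
    case (Cons z zs)
    then have "last v = z" by (metis last_snoc rev_eq_Cons_iff)
    moreover have "runs a v = runs a (z # zs)" using Cons by (metis runs_rev rev_rev_ident)
    ultimately show ?thesis using Cons by (simp add: runs_Cons_Cons)
  qed
  finally show ?thesis .
qed

lemma runs_pos: "a \<in> set w \<Longrightarrow> 0 < runs a w"
  unfolding runs_def by (metis (mono_tags) filter_empty_conv length_greater_0_conv remdups_adj_set)

lemma runs_le: "runs a w \<le> length w"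
  unfolding runs_def by (meson dual_order.trans length_filter_le remdups_adj_length)

lemma runs_diff: "w \<noteq> [] \<Longrightarrow> int (runs X w) - int (runs Y w) =
   (if hd w = X then 1 else 0) + (if last w = X then 1 else 0) - 1"
proof (induction w)
  case Nil then show ?case by simp
next
  case (Cons x w)
  show ?case
  proof (cases w)
    case Nil then show ?thesis by (cases x) auto
  next
    case (Cons y w')
    then have "int (runs X w) - int (runs Y w) =
      (if hd w = X then 1 else 0) + (if last w = X then 1 else 0) - 1" using Cons.IH by simp
    then show ?thesis using Cons by (cases x; cases y) (auto simp: runs_Cons_Cons)
  qed
qed

lemma count_XY: "count_list w X + count_list w Y = length w"
proof (induction w)
  case (Cons c w) then show ?case by (cases c) auto
qed simp

lemma finite_arr: "finite (arrangements a b)"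
proof -
  have "arrangements a b \<subseteq> {xs. set xs \<subseteq> {X, Y} \<and> length xs = a + b}"
    unfolding arrangements_def using sym.exhaust by auto
  then show ?thesis by (rule finite_subset) (simp add: finite_lists_length_eq)
qed

definition EXs where "EXs a b j = {u \<in> arrangements a b. (u = [] \<or> last u = X) \<and> R2 u = j}"
definition EYs where "EYs a b j = {u \<in> arrangements a b. u \<noteq> [] \<and> last u = Y \<and> R2 u = j}"

definition fX :: "nat \<Rightarrow> nat \<Rightarrow> nat \<Rightarrow> nat" where
  "fX a b j = (if b = 0 then (if j = 0 then 1 else 0) else if j = 0 then 0 else (a choose j) * ((b - 1) choose (j - 1)))"
definition fY :: "nat \<Rightarrow> nat \<Rightarrow> nat \<Rightarrow> nat" where
  "fY a b j = (if b = 0 \<or> j = 0 then 0 else (a choose (j - 1)) * ((b - 1) choose (j - 1)))"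

lemma arr_snoc[simp]: "(v @ [c] \<in> arrangements a b) \<longleftrightarrow>
   (if c = X then a \<ge> 1 \<and> v \<in> arrangements (a - 1) b else b \<ge> 1 \<and> v \<in> arrangements a (b - 1))"
  using count_XY[of v] by (cases c) (auto simp: arrangements_def)

lemma snoc_split: "u \<noteq> [] \<Longrightarrow> \<exists>v. u = v @ [last u]"
  by (metis append_butlast_last_id)

lemma EXs_0: "EXs 0 b j = (if b = 0 \<and> j = 0 then {[]} else {})"
proof -
  have "u \<in> arrangements 0 b \<Longrightarrow> u \<noteq> [] \<Longrightarrow> last u \<noteq> X" for u
  proof -
    assume "u \<in> arrangements 0 b" "u \<noteq> []"
    then have "X \<notin> set u" "last u \<in> set u" by (auto simp: arrangements_def count_list_0_iff)
    then show ?thesis by metis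
  qed
  then show ?thesis
    by (auto simp: EXs_def arrangements_def R2_def) (metis less_irrefl runs_Nil)
qed

lemma R2_snoc_X[simp]: "R2 (v @ [X]) = R2 v" by (simp add: R2_def runs_snoc)
lemma R2_snoc_Y: "R2 (v @ [Y]) = R2 v + (if v = [] \<or> last v = X then 1 else 0)"
  by (simp add: R2_def runs_snoc)

lemma EXs_Suc: "EXs (Suc a) b j = (\<lambda>v. v @ [X]) ` (EXs a b j \<union> EYs a b j)"
proof (rule set_eqI, rule iffI)
  fix u assume u: "u \<in> EXs (Suc a) b j"
  then have "u \<noteq> []" by (auto simp: EXs_def arrangements_def)
  then have lu: "last u = X" using u by (auto simp: EXs_def)
  obtain v where v: "u = v @ [X]" using snoc_split[OF \<open>u \<noteq> []\<close>] lu by metis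
  have va: "v \<in> arrangements a b" using u v by (simp add: EXs_def)
  have "R2 v = j" using u v by (simp add: EXs_def)
  then have "v \<in> EXs a b j \<union> EYs a b j" using va by (cases "v = []") (auto simp: EXs_def EYs_def)
  then show "u \<in> (\<lambda>v. v @ [X]) ` (EXs a b j \<union> EYs a b j)" using v by blast
next
  fix u assume "u \<in> (\<lambda>v. v @ [X]) ` (EXs a b j \<union> EYs a b j)"
  then obtain v where "u = v @ [X]" "v \<in> EXs a b j \<union> EYs a b j" by blast
  then show "u \<in> EXs (Suc a) b j"
    by (auto simp: EXs_def EYs_def)
qed

lemma EYs_0: "EYs a 0 j = {}"
proof -
  have "u \<in> arrangements a 0 \<Longrightarrow> u \<noteq> [] \<Longrightarrow> last u \<noteq> Y" for u
  proof -
    assume "u \<in> arrangements a 0" "u \<noteq> []"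
    then have "count_list u Y = 0" using count_XY[of u] by (auto simp: arrangements_def)
    then have "Y \<notin> set u" "last u \<in> set u" using \<open>u \<noteq> []\<close> by (auto simp: count_list_0_iff)
    then show ?thesis by metis
  qed
  then show ?thesis by (auto simp: EYs_def)
qed

lemma EYs_Suc_0: "EYs a (Suc b) 0 = {}"
proof -
  have "u \<noteq> [] \<Longrightarrow> last u = Y \<Longrightarrow> R2 u \<noteq> 0" for u
  proof -
    assume "u \<noteq> []" "last u = Y"
    then have "Y \<in> set u" by (metis last_in_set)
    then show ?thesis unfolding R2_def using runs_pos by (metis less_irrefl)
  qed
  then show ?thesis unfolding EYs_def by blast
qed

lemma EYs_Suc_Suc: "EYs a (Suc b) (Suc j) = (\<lambda>v. v @ [Y]) ` (EXs a b j \<union> EYs a b (Suc j))"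
proof (rule set_eqI, rule iffI)
  fix u assume u: "u \<in> EYs a (Suc b) (Suc j)"
  then have "u \<noteq> []" "last u = Y" by (auto simp: EYs_def)
  obtain v where v: "u = v @ [Y]" using snoc_split[OF \<open>u \<noteq> []\<close>] \<open>last u = Y\<close> by metis
  have va: "v \<in> arrangements a b" using u v by (simp add: EYs_def)
  have r: "R2 v + (if v = [] \<or> last v = X then 1 else 0) = Suc j" using u v by (simp add: EYs_def R2_snoc_Y)
  have "v \<in> EXs a b j \<union> EYs a b (Suc j)"
  proof (cases "v = [] \<or> last v = X")
    case True then show ?thesis using r va by (auto simp: EXs_def)
  next
    case False then show ?thesis using r va by (auto simp: EYs_def)
  qed
  then show "u \<in> (\<lambda>v. v @ [Y]) ` (EXs a b j \<union> EYs a b (Suc j))" using v by blast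
next
  fix u assume "u \<in> (\<lambda>v. v @ [Y]) ` (EXs a b j \<union> EYs a b (Suc j))"
  then obtain v where "u = v @ [Y]" "v \<in> EXs a b j \<union> EYs a b (Suc j)" by blast
  then show "u \<in> EYs a (Suc b) (Suc j)"
    by (auto simp: EXs_def EYs_def R2_snoc_Y)
qed

lemma finite_EXs: "finite (EXs a b j)" unfolding EXs_def using finite_arr by simp
lemma finite_EYs: "finite (EYs a b j)" unfolding EYs_def using finite_arr by simp
lemma disj_EXY: "EXs a b j \<inter> EYs a b k = {}" by (auto simp: EXs_def EYs_def)

lemma card_snoc_img: "card ((\<lambda>v. v @ [c]) ` (A \<union> B)) = card A + card B"
  if "finite A" "finite B" "A \<inter> B = {}" for A B :: "sym list set"
proof -
  have "inj_on (\<lambda>v. v @ [c]) (A \<union> B)" by (auto intro: inj_onI)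
  then show ?thesis using that by (simp add: card_image card_Un_disjoint)
qed

lemma counts: "card (EXs a b j) = fX a b j \<and> card (EYs a b j) = fY a b j"
proof (induction "a + b" arbitrary: a b j rule: less_induct)
  case less
  have cX: "card (EXs a b j) = fX a b j"
  proof (cases a)
    case 0 then show ?thesis by (simp add: EXs_0 fX_def)
  next
    case (Suc a')
    have "card (EXs a b j) = card (EXs a' b j) + card (EYs a' b j)"
      unfolding Suc EXs_Suc by (rule card_snoc_img) (auto simp: finite_EXs finite_EYs disj_EXY)
    also have "\<dots> = fX a' b j + fY a' b j" using less Suc by simp
    also have "\<dots> = fX a b j" unfolding Suc fX_def fY_def
      by (cases j) (auto simp del: binomial_Suc_Suc simp: binomial_Suc_Suc[of a'] algebra_simps)
    finally show ?thesis .
  qed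
  have cY: "card (EYs a b j) = fY a b j"
  proof (cases b)
    case 0 then show ?thesis by (simp add: EYs_0 fY_def)
  next
    case (Suc b')
    show ?thesis
    proof (cases j)
      case 0 then show ?thesis using Suc by (simp add: EYs_Suc_0 fY_def)
    next
      case (Suc j')
      have "card (EYs a b j) = card (EXs a b' j') + card (EYs a b' j)"
        unfolding Suc \<open>b = Suc b'\<close> EYs_Suc_Suc by (rule card_snoc_img) (auto simp: finite_EXs finite_EYs disj_EXY)
      also have "\<dots> = fX a b' j' + fY a b' j" using less \<open>b = Suc b'\<close> by simp
      also have "\<dots> = fY a b j" unfolding Suc \<open>b = Suc b'\<close> fX_def fY_def
        by (cases j'; cases b') (auto simp del: binomial_Suc_Suc simp: binomial_Suc_Suc algebra_simps)
      finally show ?thesis .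
    qed
  qed
  show ?case using cX cY by simp
qed



lemma sum_by_R2:
  assumes "S \<subseteq> arrangements a b"
  shows "(\<Sum>u\<in>S. h (R2 u)) = (\<Sum>j\<le>a+b. h j * real (card {u\<in>S. R2 u = j}))"
proof -
  have fS: "finite S" using assms finite_arr finite_subset by blast
  have img: "R2 ` S \<subseteq> {..a+b}"
  proof
    fix x assume "x \<in> R2 ` S"
    then obtain u where "u \<in> S" "x = R2 u" by blast
    then show "x \<in> {..a+b}" using assms runs_le[of Y u] by (auto simp: R2_def arrangements_def)
  qed
  have "(\<Sum>u\<in>S. h (R2 u)) = (\<Sum>j\<le>a+b. \<Sum>u\<in>{x\<in>S. R2 x = j}. h (R2 u))"
    using sum.group[OF fS finite_atMost img, of "\<lambda>u. h (R2 u)"] by simp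
  also have "\<dots> = (\<Sum>j\<le>a+b. h j * real (card {u\<in>S. R2 u = j}))"
    by (rule sum.cong[OF refl]) simp
  finally show ?thesis .
qed

lemma card_all_R2: "card {u \<in> arrangements a b. R2 u = j} = fX a b j + fY a b j"
proof -
  have "{u \<in> arrangements a b. R2 u = j} = EXs a b j \<union> EYs a b j"
    by (auto simp: EXs_def EYs_def)
  then show ?thesis using counts[of a b j] finite_EXs finite_EYs disj_EXY
    by (simp add: card_Un_disjoint)
qed

definition UY where "UY a b = {u \<in> arrangements a b. u \<noteq> [] \<and> last u = Y}"

lemma card_UY_R2: "card {u \<in> UY a b. R2 u = j} = fY a b j"
proof -
  have "{u \<in> UY a b. R2 u = j} = EYs a b j" by (auto simp: EYs_def UY_def)
  then show ?thesis using counts[of a b j] by simp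
qed

lemma sum_all:
  "(\<Sum>u\<in>arrangements a (Suc b'). h (R2 u)) =
   (\<Sum>i\<le>a+b'. h (Suc i) * real ((b' choose i) * (Suc a choose (i + 1))))"
proof -
  have "(\<Sum>u\<in>arrangements a (Suc b'). h (R2 u)) =
        (\<Sum>j\<le>Suc (a+b'). h j * real (fX a (Suc b') j + fY a (Suc b') j))"
    using sum_by_R2[of "arrangements a (Suc b')" a "Suc b'" h] by (simp add: card_all_R2)
  also have "\<dots> = (\<Sum>i\<le>a+b'. h (Suc i) * real ((b' choose i) * (Suc a choose (i + 1))))"
    by (subst sum.atMost_Suc_shift) (simp add: fX_def fY_def algebra_simps)
  finally show ?thesis .
qed

lemma sum_UY:
  "(\<Sum>u\<in>UY a (Suc b'). h (R2 u)) =
   (\<Sum>i\<le>a+b'. h (Suc i) * real ((b' choose i) * (a choose (i + 0))))"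
proof -
  have "(\<Sum>u\<in>UY a (Suc b'). h (R2 u)) =
        (\<Sum>j\<le>Suc (a+b'). h j * real (fY a (Suc b') j))"
  proof -
    have "UY a (Suc b') \<subseteq> arrangements a (Suc b')" by (auto simp: UY_def)
    from sum_by_R2[OF this, of h] show ?thesis by (simp only: card_UY_R2 add_Suc_right)
  qed
  also have "\<dots> = (\<Sum>i\<le>a+b'. h (Suc i) * real ((b' choose i) * (a choose (i + 0))))"
    by (subst sum.atMost_Suc_shift) (simp add: fY_def algebra_simps)
  finally show ?thesis .
qed



lemma moments:
  fixes p q s K :: nat
  assumes "q \<le> K"
  shows "(\<Sum>i\<le>K. real ((q choose i) * (p choose (i + s)))) = real ((p + q) choose (q + s))"
    and "(\<Sum>i\<le>K. real i * real ((q choose i) * (p choose (i + s)))) = real (q * ((p + q - 1) choose (q + s)))"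
    and "(\<Sum>i\<le>K. (real i)^2 * real ((q choose i) * (p choose (i + s)))) =
         real (q * (q - 1) * ((p + q - 2) choose (q + s))) + real (q * ((p + q - 1) choose (q + s)))"
proof -
  show "(\<Sum>i\<le>K. real ((q choose i) * (p choose (i + s)))) = real ((p + q) choose (q + s))"
    using MV[OF assms] by (simp only: of_nat_sum[symmetric])
  have e1: "(\<Sum>i\<le>K. real i * real ((q choose i) * (p choose (i + s)))) = real (\<Sum>i\<le>K. i * (q choose i) * (p choose (i + s)))"
    by (simp add: of_nat_sum mult.assoc)
  show m2: "(\<Sum>i\<le>K. real i * real ((q choose i) * (p choose (i + s)))) = real (q * ((p + q - 1) choose (q + s)))"
    using MV1[OF assms] e1 by simp
  have sq: "(real i)^2 = real (i * (i - 1)) + real i" for i :: nat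
  proof -
    have "i * (i - 1) + i = i * i" by (cases i) auto
    then have "real (i * (i - 1) + i) = real (i * i)" by simp
    then show ?thesis by (simp only: of_nat_add of_nat_mult power2_eq_square)
  qed
  have "(\<Sum>i\<le>K. (real i)^2 * real ((q choose i) * (p choose (i + s)))) =
        (\<Sum>i\<le>K. real (i * (i - 1) * (q choose i) * (p choose (i + s))) + real i * real ((q choose i) * (p choose (i + s))))"
    by (rule sum.cong[OF refl]) (simp only: sq distrib_right of_nat_mult mult.assoc)
  also have "\<dots> = real (\<Sum>i\<le>K. i * (i - 1) * (q choose i) * (p choose (i + s))) + (\<Sum>i\<le>K. real i * real ((q choose i) * (p choose (i + s))))"
    by (simp only: sum.distrib of_nat_sum)
  finally show "(\<Sum>i\<le>K. (real i)^2 * real ((q choose i) * (p choose (i + s)))) =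
         real (q * (q - 1) * ((p + q - 2) choose (q + s))) + real (q * ((p + q - 1) choose (q + s)))"
    by (simp only: MV2[OF assms] m2)
qed

lemma real_mm1: "real (x * (x - 1) * y) = real x * (real x - 1) * real y"
  by (cases x) (auto simp: algebra_simps)

lemma var_formula:
  fixes T0 T1 T2 :: real
  assumes "T0 > 0"
  shows "T2 / T0 - (T1 / T0)^2 = (T2 * T0 - T1^2) / T0^2"
  using assms by (simp add: field_simps power2_eq_square)

lemma alg_i:
  fixes x y c :: real
  assumes "c > 0" "x \<ge> 0" "y \<ge> 0" "x + y \<ge> 1"
  shows "(y * (y - 1) * ((x - 1) * x * c / ((x + y + 1) * (x + y + 1 - 1))) + y * (x * c / (x + y + 1))) / c
         - (y * (x * c / (x + y + 1)) / c)^2 = y * (y + 1) * x * (x + 1) / ((x + y + 1)^2 * (x + y))"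
proof -
  have d1: "x + y + 1 > 0" "x + y > 0" using assms by auto
  have e: "x + y + 1 - 1 = x + y" by simp
  have "y * (y - 1) * ((x - 1) * x * c / ((x + y + 1) * (x + y))) + y * (x * c / (x + y + 1))
        = c * (y * (y - 1) * (x - 1) * x / ((x + y + 1) * (x + y)) + y * x / (x + y + 1))"
    by (simp add: algebra_simps)
  then have 1: "(y * (y - 1) * ((x - 1) * x * c / ((x + y + 1) * (x + y + 1 - 1))) + y * (x * c / (x + y + 1))) / c
        = y * (y - 1) * (x - 1) * x / ((x + y + 1) * (x + y)) + y * x / (x + y + 1)"
    using assms(1) unfolding e by simp
  have 2: "(y * (x * c / (x + y + 1)) / c) = y * x / (x + y + 1)"
    using assms by simp
  have 3: "y * (y - 1) * (x - 1) * x / ((x + y + 1) * (x + y)) + y * x / (x + y + 1) - (y * x / (x + y + 1))^2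
     = y * (y + 1) * x * (x + 1) / ((x + y + 1)^2 * (x + y))"
  proof -
    have nz: "x + y + 1 \<noteq> 0" "x + y \<noteq> 0" using d1 by auto
    show ?thesis
      by (simp add: nz divide_simps power2_eq_square) (simp add: algebra_simps)
  qed
  show ?thesis unfolding 1 2 3 ..
qed
lemma alg_iii:
  fixes x y c :: real
  assumes "c > 0" "x \<ge> 0" "y \<ge> 0" "x + y \<ge> 2"
  shows "(y * (y - 1) * ((x - 1) * x * c / ((x + y) * (x + y - 1))) + y * (x * c / (x + y))) / c
         - (y * (x * c / (x + y)) / c)^2 = y^2 * x^2 / ((x + y)^2 * (x + y - 1))"
proof -
  have d1: "x + y - 1 > 0" "x + y > 0" using assms by auto
  have "y * (y - 1) * ((x - 1) * x * c / ((x + y) * (x + y - 1))) + y * (x * c / (x + y))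
        = c * (y * (y - 1) * (x - 1) * x / ((x + y) * (x + y - 1)) + y * x / (x + y))"
    by (simp add: algebra_simps)
  then have 1: "(y * (y - 1) * ((x - 1) * x * c / ((x + y) * (x + y - 1))) + y * (x * c / (x + y))) / c
        = y * (y - 1) * (x - 1) * x / ((x + y) * (x + y - 1)) + y * x / (x + y)"
    using assms(1) by simp
  have 2: "(y * (x * c / (x + y)) / c) = y * x / (x + y)"
    using assms by simp
  have 3: "y * (y - 1) * (x - 1) * x / ((x + y) * (x + y - 1)) + y * x / (x + y) - (y * x / (x + y))^2
     = y^2 * x^2 / ((x + y)^2 * (x + y - 1))"
  proof -
    have nz: "x + y - 1 \<noteq> 0" "x + y \<noteq> 0" "x + y \<noteq> 1" using d1 by auto
    show ?thesis
      by (simp add: nz divide_simps power2_eq_square) (simp add: algebra_simps)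
  qed
  show ?thesis unfolding 1 2 3 ..
qed

lemma core_i:
  assumes "a + b' \<ge> 1"
  shows "(\<Sum>u\<in>arrangements a (Suc b'). (real (R2 u) - 1)^2) / real (card (arrangements a (Suc b')))
       - ((\<Sum>u\<in>arrangements a (Suc b'). real (R2 u) - 1) / real (card (arrangements a (Suc b'))))^2
       = real b' * (real b' + 1) * real a * (real a + 1) / ((real a + real b' + 1)^2 * (real a + real b'))"
proof -
  let ?S = "arrangements a (Suc b')"
  define M where "M = Suc a + b'"
  define C0 where "C0 = real (M choose (b' + 1))"
  define C1 where "C1 = real ((M - 1) choose (b' + 1))"
  define C2 where "C2 = real ((M - 2) choose (b' + 1))"
  have K: "b' \<le> a + b'" by simp
  have s0: "real (card ?S) = C0"
  proof -
    have "real (card ?S) = (\<Sum>i\<le>a+b'. real ((b' choose i) * (Suc a choose (i + 1))))"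
      using sum_all[of "\<lambda>j. 1::real" a b'] by simp
    also have "\<dots> = C0" unfolding C0_def M_def using moments(1)[OF K, of "Suc a" 1] by simp
    finally show ?thesis .
  qed
  have s1: "(\<Sum>u\<in>?S. real (R2 u) - 1) = real b' * C1"
  proof -
    have "(\<Sum>u\<in>?S. real (R2 u) - 1) = (\<Sum>i\<le>a+b'. real i * real ((b' choose i) * (Suc a choose (i + 1))))"
      using sum_all[of "\<lambda>j. real j - 1" a b'] by simp
    also have "\<dots> = real b' * C1" unfolding C1_def M_def using moments(2)[OF K, of "Suc a" 1] by simp
    finally show ?thesis .
  qed
  have s2: "(\<Sum>u\<in>?S. (real (R2 u) - 1)^2) = real b' * (real b' - 1) * C2 + real b' * C1"
  proof -
    have "(\<Sum>u\<in>?S. (real (R2 u) - 1)^2) = (\<Sum>i\<le>a+b'. (real i)^2 * real ((b' choose i) * (Suc a choose (i + 1))))"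
      using sum_all[of "\<lambda>j. (real j - 1)^2" a b'] by simp
    also have "\<dots> = real b' * (real b' - 1) * C2 + real b' * C1"
      unfolding C1_def C2_def M_def using moments(3)[OF K, of "Suc a" 1]
      by (simp only: real_mm1) (simp only: of_nat_mult)
    finally show ?thesis .
  qed
  have M2: "real M \<ge> 2" using assms unfolding M_def by simp
  have C0pos: "C0 > 0"
  proof -
    have "b' + 1 \<le> M" unfolding M_def by simp
    then have "0 < M choose (b' + 1)" by (rule zero_less_binomial)
    then show ?thesis unfolding C0_def by (simp only: of_nat_0_less_iff)
  qed
  have r1: "real a * C0 = real M * C1"
  proof -
    have "(M - (b' + 1)) * (M choose (b' + 1)) = M * ((M - 1) choose (b' + 1))"
      by (rule binomial_absorb_comp)
    moreover have "M - (b' + 1) = a" unfolding M_def by simp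
    ultimately have "real (a * (M choose (b' + 1))) = real (M * ((M - 1) choose (b' + 1)))" by simp
    then show ?thesis unfolding C0_def C1_def by (simp only: of_nat_mult)
  qed
  have r2: "(real a - 1) * C1 = (real M - 1) * C2"
  proof (cases a)
    case 0
    then show ?thesis unfolding C1_def C2_def M_def by (simp add: binomial_eq_0)
  next
    case (Suc a')
    have "(M - 1 - (b' + 1)) * ((M - 1) choose (b' + 1)) = (M - 1) * ((M - 1 - 1) choose (b' + 1))"
      by (rule binomial_absorb_comp)
    moreover have "M - 1 - (b' + 1) = a'" "M - 1 - 1 = M - 2" using Suc unfolding M_def by auto
    ultimately have "real (a' * ((M - 1) choose (b' + 1))) = real ((M - 1) * ((M - 2) choose (b' + 1)))" by simp
    then have "real a' * C1 = real (M - 1) * C2" unfolding C1_def C2_def by (simp only: of_nat_mult)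
    moreover have "real (M - 1) = real M - 1" using M2 by (simp add: of_nat_diff)
    ultimately show ?thesis using Suc by simp
  qed
  have Mpos: "real M > 0" "real M - 1 > 0" using M2 by auto
  have C1e: "C1 = real a * C0 / real M" using r1 Mpos by (simp add: field_simps)
  have C2e': "C2 = (real a - 1) * C1 / (real M - 1)" using r2 Mpos by (simp add: field_simps)
  have C2e: "C2 = (real a - 1) * real a * C0 / (real M * (real M - 1))"
    unfolding C2e' C1e by simp
  have Me: "real M = real a + real b' + 1" unfolding M_def by simp
  show ?thesis
    unfolding s0 s1 s2 C2e C1e Me
    by (rule alg_i) (use C0pos assms in auto)
qed

lemma core_iii:
  assumes "a + b' \<ge> 2"
  shows "(\<Sum>u\<in>UY a (Suc b'). (real (R2 u) - 1)^2) / real (card (UY a (Suc b')))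
       - ((\<Sum>u\<in>UY a (Suc b'). real (R2 u) - 1) / real (card (UY a (Suc b'))))^2
       = (real b')^2 * (real a)^2 / ((real a + real b')^2 * (real a + real b' - 1))"
proof -
  let ?S = "UY a (Suc b')"
  define M where "M = a + b'"
  define C0 where "C0 = real (M choose b')"
  define C1 where "C1 = real ((M - 1) choose b')"
  define C2 where "C2 = real ((M - 2) choose b')"
  have K: "b' \<le> a + b'" by simp
  have s0: "real (card ?S) = C0"
  proof -
    have "real (card ?S) = (\<Sum>i\<le>a+b'. real ((b' choose i) * (a choose (i + 0))))"
      using sum_UY[of "\<lambda>j. 1::real" a b'] by simp
    also have "\<dots> = C0" unfolding C0_def M_def using moments(1)[OF K, of a 0] by simp
    finally show ?thesis .
  qed
  have s1: "(\<Sum>u\<in>?S. real (R2 u) - 1) = real b' * C1"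
  proof -
    have "(\<Sum>u\<in>?S. real (R2 u) - 1) = (\<Sum>i\<le>a+b'. real i * real ((b' choose i) * (a choose (i + 0))))"
      using sum_UY[of "\<lambda>j. real j - 1" a b'] by simp
    also have "\<dots> = real b' * C1" unfolding C1_def M_def using moments(2)[OF K, of a 0] by simp
    finally show ?thesis .
  qed
  have s2: "(\<Sum>u\<in>?S. (real (R2 u) - 1)^2) = real b' * (real b' - 1) * C2 + real b' * C1"
  proof -
    have "(\<Sum>u\<in>?S. (real (R2 u) - 1)^2) = (\<Sum>i\<le>a+b'. (real i)^2 * real ((b' choose i) * (a choose (i + 0))))"
      using sum_UY[of "\<lambda>j. (real j - 1)^2" a b'] by simp
    also have "\<dots> = real b' * (real b' - 1) * C2 + real b' * C1"
      unfolding C1_def C2_def M_def using moments(3)[OF K, of a 0]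
      by (simp only: real_mm1) (simp only: of_nat_mult add_0_right)
    finally show ?thesis .
  qed
  have M2: "real M \<ge> 2" using assms unfolding M_def by simp
  have C0pos: "C0 > 0"
  proof -
    have "b' \<le> M" unfolding M_def by simp
    then have "0 < M choose b'" by (rule zero_less_binomial)
    then show ?thesis unfolding C0_def by (simp only: of_nat_0_less_iff)
  qed
  have r1: "real a * C0 = real M * C1"
  proof -
    have "(M - b') * (M choose b') = M * ((M - 1) choose b')"
      by (rule binomial_absorb_comp)
    moreover have "M - b' = a" unfolding M_def by simp
    ultimately have "real (a * (M choose b')) = real (M * ((M - 1) choose b'))" by simp
    then show ?thesis unfolding C0_def C1_def by (simp only: of_nat_mult)
  qed
  have r2: "(real a - 1) * C1 = (real M - 1) * C2"
  proof (cases a)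
    case 0
    then show ?thesis using assms unfolding C1_def C2_def M_def by (simp add: binomial_eq_0)
  next
    case (Suc a')
    have "(M - 1 - b') * ((M - 1) choose b') = (M - 1) * ((M - 1 - 1) choose b')"
      by (rule binomial_absorb_comp)
    moreover have "M - 1 - b' = a'" "M - 1 - 1 = M - 2" using Suc unfolding M_def by auto
    ultimately have "real (a' * ((M - 1) choose b')) = real ((M - 1) * ((M - 2) choose b'))" by simp
    then have "real a' * C1 = real (M - 1) * C2" unfolding C1_def C2_def by (simp only: of_nat_mult)
    moreover have "real (M - 1) = real M - 1" using M2 by (simp add: of_nat_diff)
    ultimately show ?thesis using Suc by simp
  qed
  have Mpos: "real M > 0" "real M - 1 > 0" using M2 by auto
  have C1e: "C1 = real a * C0 / real M" using r1 Mpos by (simp add: field_simps)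
  have C2e': "C2 = (real a - 1) * C1 / (real M - 1)" using r2 Mpos by (simp add: field_simps)
  have C2e: "C2 = (real a - 1) * real a * C0 / (real M * (real M - 1))"
    unfolding C2e' C1e by simp
  have Me: "real M = real a + real b'" unfolding M_def by simp
  show ?thesis
    unfolding s0 s1 s2 C2e C1e Me
    by (rule alg_iii) (use C0pos assms in auto)
qed



lemma cond_pmf_of_set:
  assumes "finite A" "A \<inter> E \<noteq> {}"
  shows "cond_pmf (pmf_of_set A) E = pmf_of_set (A \<inter> E)"
proof (rule pmf_eqI)
  fix x
  have A: "A \<noteq> {}" using assms by auto
  have ne: "set_pmf (pmf_of_set A) \<inter> E \<noteq> {}" using assms A by simp
  have cA: "card A > 0" "card (A \<inter> E) > 0" using assms A by (auto simp: card_gt_0_iff)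
  show "pmf (cond_pmf (pmf_of_set A) E) x = pmf (pmf_of_set (A \<inter> E)) x"
    using cA unfolding pmf_cond[OF ne]
    by (simp add: pmf_of_set[OF A assms(1)] pmf_of_set[OF assms(2)] measure_pmf_of_set[OF A assms(1)]
        assms indicator_def)
qed

lemma var_pmf_of_set:
  fixes f :: "'a \<Rightarrow> real"
  assumes "finite B" "B \<noteq> {}"
  shows "measure_pmf.variance (pmf_of_set B) f =
    (\<Sum>x\<in>B. (f x - c)^2) / real (card B) - ((\<Sum>x\<in>B. f x - c) / real (card B))^2"
proof -
  define N where "N = real (card B)"
  have Npos: "N > 0" using assms unfolding N_def by (simp add: card_gt_0_iff)
  define \<mu> where "\<mu> = (\<Sum>x\<in>B. f x) / N"
  define m where "m = (\<Sum>x\<in>B. f x - c) / N"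
  have mm: "\<mu> = m + c" unfolding \<mu>_def m_def using Npos
    by (simp add: sum_subtractf N_def field_simps)
  have sg: "(\<Sum>x\<in>B. f x - c) = N * m" unfolding m_def using Npos by simp
  have "measure_pmf.variance (pmf_of_set B) f = (\<Sum>x\<in>B. (f x - \<mu>)^2) / N"
    unfolding \<mu>_def N_def by (simp add: integral_pmf_of_set[OF assms(2,1)])
  also have "(\<Sum>x\<in>B. (f x - \<mu>)^2) = (\<Sum>x\<in>B. (f x - c)^2 - 2 * m * (f x - c) + m^2)"
    unfolding mm by (rule sum.cong[OF refl]) (simp add: power2_eq_square algebra_simps)
  also have "\<dots> = (\<Sum>x\<in>B. (f x - c)^2) - 2 * m * (\<Sum>x\<in>B. f x - c) + N * m^2"
    by (simp only: sum.distrib sum_subtractf sum_distrib_left[symmetric] sum_constant N_def)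
  finally show ?thesis unfolding sg using Npos unfolding m_def[symmetric] N_def[symmetric]
    by (simp add: field_simps power2_eq_square)
qed

lemma cond_var_set:
  fixes f :: "'a \<Rightarrow> real"
  assumes "finite A" "A \<inter> E \<noteq> {}"
  shows "cond_var (pmf_of_set A) E f =
    (\<Sum>x\<in>A \<inter> E. (f x - c)^2) / real (card (A \<inter> E)) - ((\<Sum>x\<in>A \<inter> E. f x - c) / real (card (A \<inter> E)))^2"
  unfolding cond_var_def cond_pmf_of_set[OF assms]
  by (rule var_pmf_of_set) (use assms in auto)



lemma R2_Cons_X[simp]: "R2 (X # v) = R2 v"
  by (cases v) (auto simp: R2_def runs_Cons_Cons)
lemma R1_Cons_Y[simp]: "R1 (Y # v) = R1 v"
  by (cases v) (auto simp: R1_def runs_Cons_Cons)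
lemma R1_snoc_Y[simp]: "R1 (v @ [Y]) = R1 v" by (simp add: R1_def runs_snoc)
lemma R1_rev[simp]: "R1 (rev w) = R1 w" by (simp add: R1_def)
lemma R2_rev[simp]: "R2 (rev w) = R2 w" by (simp add: R2_def)
lemma RM_rev[simp]: "RM (rev w) = RM w" by (simp add: RM_def)

lemma diffR: "w \<noteq> [] \<Longrightarrow> int (R1 w) - int (R2 w) =
   (if hd w = X then 1 else 0) + (if last w = X then 1 else 0) - 1"
  unfolding R1_def R2_def by (rule runs_diff)

lemma R_XuX: "R1 (X # u @ [X]) = R2 u + 1 \<and> R2 (X # u @ [X]) = R2 u"
proof -
  have "R2 (X # u @ [X]) = R2 u" by simp
  moreover have "int (R1 (X # u @ [X])) - int (R2 (X # u @ [X])) = 1"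
    using diffR[of "X # u @ [X]"] by simp
  ultimately show ?thesis by linarith
qed

lemma R_YuY: "R2 (Y # u @ [Y]) = R1 u + 1 \<and> R1 (Y # u @ [Y]) = R1 u"
proof -
  have "R1 (Y # u @ [Y]) = R1 u" by simp
  moreover have "int (R1 (Y # u @ [Y])) - int (R2 (Y # u @ [Y])) = -1"
    using diffR[of "Y # u @ [Y]"] by simp
  ultimately show ?thesis by linarith
qed

lemma R_Xu: "u \<noteq> [] \<Longrightarrow> last u = Y \<Longrightarrow> R1 (X # u) = R2 u \<and> R2 (X # u) = R2 u"
proof -
  assume "u \<noteq> []" "last u = Y"
  then have "int (R1 (X # u)) - int (R2 (X # u)) = 0"
    using diffR[of "X # u"] by simp
  then show ?thesis by simp
qed

lemma split2: assumes "length w \<ge> 2" shows "w = hd w # butlast (tl w) @ [last w]"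
proof (cases w)
  case Nil then show ?thesis using assms by simp
next
  case (Cons x xs)
  from assms have "xs \<noteq> []" using Cons by auto
  then show ?thesis using Cons by simp
qed

lemma set_i:
  assumes "n1 + n2 \<ge> 2"
  shows "arrangements n1 n2 \<inter> {w. R1 w > R2 w} = (\<lambda>u. X # u @ [X]) ` {u \<in> arrangements (n1 - 2) n2. 2 \<le> n1}"
proof (rule set_eqI, rule iffI)
  fix w assume w: "w \<in> arrangements n1 n2 \<inter> {w. R1 w > R2 w}"
  then have len: "length w \<ge> 2" using assms by (simp add: arrangements_def)
  then have "w \<noteq> []" by auto
  have "hd w = X \<and> last w = X"
    using diffR[OF \<open>w \<noteq> []\<close>] w by (auto split: if_splits)
  then have we: "w = X # butlast (tl w) @ [X]" using split2[OF len] by simp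
  define u where "u = butlast (tl w)"
  have "u \<in> arrangements (n1 - 2) n2" "2 \<le> n1"
    using w we unfolding u_def[symmetric] by (auto simp: arrangements_def)
  then show "w \<in> (\<lambda>u. X # u @ [X]) ` {u \<in> arrangements (n1 - 2) n2. 2 \<le> n1}"
    using we unfolding u_def[symmetric] by blast
next
  fix w assume "w \<in> (\<lambda>u. X # u @ [X]) ` {u \<in> arrangements (n1 - 2) n2. 2 \<le> n1}"
  then obtain u where "w = X # u @ [X]" "u \<in> arrangements (n1 - 2) n2" "2 \<le> n1" by blast
  then show "w \<in> arrangements n1 n2 \<inter> {w. R1 w > R2 w}"
    using R_XuX[of u] by (auto simp: arrangements_def)
qed


lemma set_ii:
  assumes "n1 + n2 \<ge> 2"
  shows "arrangements n1 n2 \<inter> {w. R1 w < R2 w} = (\<lambda>u. Y # u @ [Y]) ` {u \<in> arrangements n1 (n2 - 2). 2 \<le> n2}"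
proof (rule set_eqI, rule iffI)
  fix w assume w: "w \<in> arrangements n1 n2 \<inter> {w. R1 w < R2 w}"
  then have len: "length w \<ge> 2" using assms by (simp add: arrangements_def)
  then have "w \<noteq> []" by auto
  have "hd w = Y \<and> last w = Y"
    using diffR[OF \<open>w \<noteq> []\<close>] w by (auto split: if_splits)
  then have we: "w = Y # butlast (tl w) @ [Y]" using split2[OF len] by simp
  define u where "u = butlast (tl w)"
  have "u \<in> arrangements n1 (n2 - 2)" "2 \<le> n2"
    using w we count_le_length[of u X] unfolding u_def[symmetric] by (auto simp: arrangements_def)
  then show "w \<in> (\<lambda>u. Y # u @ [Y]) ` {u \<in> arrangements n1 (n2 - 2). 2 \<le> n2}"
    using we unfolding u_def[symmetric] by blast
next
  fix w assume "w \<in> (\<lambda>u. Y # u @ [Y]) ` {u \<in> arrangements n1 (n2 - 2). 2 \<le> n2}"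
  then obtain u where "w = Y # u @ [Y]" "u \<in> arrangements n1 (n2 - 2)" "2 \<le> n2" by blast
  then show "w \<in> arrangements n1 n2 \<inter> {w. R1 w < R2 w}"
    using R_YuY[of u] by (auto simp: arrangements_def)
qed

definition swf :: "sym \<Rightarrow> sym" where "swf s = (if s = X then Y else X)"
definition sw :: "sym list \<Rightarrow> sym list" where "sw = map swf"

lemma swf_swf[simp]: "swf (swf s) = s" by (cases s) (auto simp: swf_def)
lemma inj_swf: "inj swf" by (metis injI swf_swf)
lemma sw_sw[simp]: "sw (sw v) = v" by (simp add: sw_def comp_def)
lemma inj_sw: "inj sw" by (metis injI sw_sw)

lemma R1_sw[simp]: "R1 (sw v) = R2 v"
proof -
  have "(\<lambda>s. s = X) \<circ> swf = (\<lambda>s. s = Y)" by (auto simp: swf_def fun_eq_iff)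
  then show ?thesis
    unfolding R1_def R2_def runs_def sw_def remdups_adj_map_injective[OF inj_swf]
    by (simp add: filter_map)
qed

lemma count_sw: "count_list (sw v) X = count_list v Y"
proof -
  have "count_list (map swf v) (swf Y) = count_list v Y" by (rule count_list_map_conv[OF inj_swf])
  then show ?thesis by (simp add: sw_def swf_def)
qed

lemma sw_arr: "sw ` arrangements b a = arrangements a b"
proof -
  have 1: "sw v \<in> arrangements a b" if "v \<in> arrangements b a" for v a b
    using that count_XY[of v] count_sw[of v] by (auto simp: arrangements_def sw_def)
  show ?thesis
  proof (rule set_eqI, rule iffI)
    fix w assume "w \<in> sw ` arrangements b a" then show "w \<in> arrangements a b" using 1 by blast
  next
    fix w assume "w \<in> arrangements a b"
    then have "sw w \<in> arrangements b a" using 1 by blast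
    then show "w \<in> sw ` arrangements b a" by (metis image_eqI sw_sw)
  qed
qed

lemma sum_sw: "(\<Sum>u\<in>arrangements a b. h (R1 u)) = (\<Sum>v\<in>arrangements b a. h (R2 v))"
proof -
  have "(\<Sum>u\<in>arrangements a b. h (R1 u)) = (\<Sum>u\<in>sw ` arrangements b a. h (R1 u))" by (simp add: sw_arr)
  also have "\<dots> = (\<Sum>v\<in>arrangements b a. h (R1 (sw v)))"
    by (subst sum.reindex) (auto intro: inj_on_subset[OF inj_sw])
  finally show ?thesis by simp
qed

lemma card_sw: "card (arrangements a b) = card (arrangements b a)"
  by (metis sw_arr card_image inj_on_subset[OF inj_sw] subset_UNIV)

definition PX where "PX n1 n2 = (\<lambda>u. X # u) ` UY (n1 - 1) n2"

lemma PX_mem: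
  assumes "w \<in> arrangements n1 n2" "length w \<ge> 2" "hd w = X" "last w = Y"
  shows "w \<in> PX n1 n2"
proof -
  obtain t where we: "w = X # t" using assms(2,3) by (cases w) auto
  have "t \<noteq> []" using assms(2) we by auto
  moreover have "last t = Y" using assms(4) we calculation by simp
  moreover have "t \<in> arrangements (n1 - 1) n2"
  proof -
    have "length t + 1 = n1 + n2" "count_list t X + 1 = n1"
      using assms(1) we by (auto simp: arrangements_def)
    then show ?thesis by (auto simp: arrangements_def)
  qed
  ultimately have "t \<in> UY (n1 - 1) n2" by (simp add: UY_def)
  then show ?thesis unfolding PX_def using we by blast
qed

lemma PX_sub:
  assumes "n1 \<ge> 1" "w \<in> PX n1 n2"
  shows "w \<in> arrangements n1 n2 \<and> R1 w = R2 w \<and> hd w = X \<and> last w = Y"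
proof -
  obtain u where u: "w = X # u" "u \<in> UY (n1 - 1) n2" using assms unfolding PX_def by blast
  then have "u \<noteq> []" "last u = Y" "u \<in> arrangements (n1 - 1) n2" by (auto simp: UY_def)
  then show ?thesis using u R_Xu[of u] assms(1) by (auto simp: arrangements_def)
qed

lemma set_iii:
  assumes "n1 + n2 \<ge> 2" "n1 \<ge> 1"
  shows "arrangements n1 n2 \<inter> {w. R1 w = R2 w} = PX n1 n2 \<union> rev ` PX n1 n2"
proof (rule set_eqI, rule iffI)
  fix w assume w: "w \<in> arrangements n1 n2 \<inter> {w. R1 w = R2 w}"
  then have len: "length w \<ge> 2" using assms by (simp add: arrangements_def)
  then have "w \<noteq> []" by auto
  have "(hd w = X \<and> last w = Y) \<or> (hd w = Y \<and> last w = X)"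
    using diffR[OF \<open>w \<noteq> []\<close>] w by (auto split: if_splits)
  then show "w \<in> PX n1 n2 \<union> rev ` PX n1 n2"
  proof
    assume "hd w = X \<and> last w = Y"
    then show ?thesis using PX_mem[of w] w len by auto
  next
    assume h: "hd w = Y \<and> last w = X"
    have "rev w \<in> arrangements n1 n2" using w by (simp add: arrangements_def)
    moreover have "hd (rev w) = X" "last (rev w) = Y" using h \<open>w \<noteq> []\<close> by (auto simp: hd_rev last_rev)
    ultimately have "rev w \<in> PX n1 n2" using PX_mem[of "rev w"] len by auto
    then show ?thesis by (metis UnI2 image_eqI rev_rev_ident)
  qed
next
  fix w assume "w \<in> PX n1 n2 \<union> rev ` PX n1 n2"
  then show "w \<in> arrangements n1 n2 \<inter> {w. R1 w = R2 w}"
    using PX_sub[OF assms(2)] by (auto simp: arrangements_def)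
qed

lemma PX_disj: "n1 \<ge> 1 \<Longrightarrow> PX n1 n2 \<inter> rev ` PX n1 n2 = {}"
proof -
  assume n1: "n1 \<ge> 1"
  have "w \<in> PX n1 n2 \<Longrightarrow> v \<in> PX n1 n2 \<Longrightarrow> w = rev v \<Longrightarrow> False" for w v
  proof -
    assume a: "w \<in> PX n1 n2" "v \<in> PX n1 n2" "w = rev v"
    then have "hd w = X" "last v = Y" "v \<noteq> []" using PX_sub[OF n1] by (auto simp: PX_def)
    then show False using a(3) by (simp add: hd_rev)
  qed
  then show ?thesis by blast
qed



lemma count_rep: "count_list (replicate n x) y = (if x = y then n else 0)"
  by (induction n) auto

lemma arr_ne: "arrangements n1 n2 \<noteq> {}"
proof -
  have "replicate n1 X @ replicate n2 Y \<in> arrangements n1 n2"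
    by (simp add: arrangements_def count_rep)
  then show ?thesis by blast
qed

lemma set_arr_pmf: "set_pmf (arr_pmf n1 n2) = arrangements n1 n2"
  unfolding arr_pmf_def by (rule set_pmf_of_set[OF arr_ne finite_arr])

lemma RM_XuX: "RM (X # u @ [X]) = R2 u + 1" using R_XuX[of u] by (simp add: RM_def)
lemma RM_YuY: "RM (Y # u @ [Y]) = R1 u + 1" using R_YuY[of u] by (simp add: RM_def)

lemma part_i:
  assumes "n1 \<ge> 1" "n2 \<ge> 1" "n1 + n2 > 3"
    and ne: "set_pmf (arr_pmf n1 n2) \<inter> {w. R1 w > R2 w} \<noteq> {}"
  shows "cond_var (arr_pmf n1 n2) {w. R1 w > R2 w} (\<lambda>w. real (RM w)) =
      real n2 * (real n2 - 1) * (real n1 - 2) * (real n1 - 1) / ((real (n1 + n2) - 2)^2 * (real (n1 + n2) - 3))"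
proof -
  let ?A = "arrangements n1 n2" and ?E = "{w. R1 w > R2 w}"
  have ne': "?A \<inter> ?E \<noteq> {}" using ne by (simp add: set_arr_pmf)
  have S: "?A \<inter> ?E = (\<lambda>u. X # u @ [X]) ` {u \<in> arrangements (n1 - 2) n2. 2 \<le> n1}"
    using set_i assms by simp
  then have n1: "n1 \<ge> 2" using ne' by auto
  then obtain a where a: "n1 = a + 2" by (metis add.commute le_Suc_ex add_2_eq_Suc)
  obtain b' where b: "n2 = Suc b'" using assms(2) by (cases n2) auto
  have S': "?A \<inter> ?E = (\<lambda>u. X # u @ [X]) ` arrangements a (Suc b')" unfolding S using a b by simp
  have inj: "inj_on (\<lambda>u. X # u @ [X]) U" for U by (auto intro: inj_onI)
  have "cond_var (arr_pmf n1 n2) ?E (\<lambda>w. real (RM w)) =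
     (\<Sum>x\<in>?A \<inter> ?E. (real (RM x) - 2)^2) / real (card (?A \<inter> ?E)) - ((\<Sum>x\<in>?A \<inter> ?E. real (RM x) - 2) / real (card (?A \<inter> ?E)))^2"
    unfolding arr_pmf_def by (rule cond_var_set[OF finite_arr ne'])
  also have "\<dots> = (\<Sum>u\<in>arrangements a (Suc b'). (real (R2 u) - 1)^2) / real (card (arrangements a (Suc b')))
       - ((\<Sum>u\<in>arrangements a (Suc b'). real (R2 u) - 1) / real (card (arrangements a (Suc b'))))^2"
    unfolding S' by (simp add: sum.reindex[OF inj] card_image[OF inj] RM_XuX algebra_simps)
  also have "\<dots> = real b' * (real b' + 1) * real a * (real a + 1) / ((real a + real b' + 1)^2 * (real a + real b'))"
    by (rule core_i) (use assms a b in auto)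
  also have "\<dots> = real n2 * (real n2 - 1) * (real n1 - 2) * (real n1 - 1) / ((real (n1 + n2) - 2)^2 * (real (n1 + n2) - 3))"
    unfolding a b by (simp add: algebra_simps)
  finally show ?thesis .
qed

lemma part_ii:
  assumes "n1 \<ge> 1" "n2 \<ge> 1" "n1 + n2 > 3"
    and ne: "set_pmf (arr_pmf n1 n2) \<inter> {w. R1 w < R2 w} \<noteq> {}"
  shows "cond_var (arr_pmf n1 n2) {w. R1 w < R2 w} (\<lambda>w. real (RM w)) =
      real n1 * (real n1 - 1) * (real n2 - 2) * (real n2 - 1) / ((real (n1 + n2) - 2)^2 * (real (n1 + n2) - 3))"
proof -
  let ?A = "arrangements n1 n2" and ?E = "{w. R1 w < R2 w}"
  have ne': "?A \<inter> ?E \<noteq> {}" using ne by (simp add: set_arr_pmf)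
  have S: "?A \<inter> ?E = (\<lambda>u. Y # u @ [Y]) ` {u \<in> arrangements n1 (n2 - 2). 2 \<le> n2}"
    using set_ii assms by simp
  then have n2: "n2 \<ge> 2" using ne' by auto
  then obtain a where a: "n2 = a + 2" by (metis add.commute le_Suc_ex add_2_eq_Suc)
  obtain b' where b: "n1 = Suc b'" using assms(1) by (cases n1) auto
  have S': "?A \<inter> ?E = (\<lambda>u. Y # u @ [Y]) ` arrangements (Suc b') a" unfolding S using a b by simp
  have inj: "inj_on (\<lambda>u. Y # u @ [Y]) U" for U by (auto intro: inj_onI)
  have "cond_var (arr_pmf n1 n2) ?E (\<lambda>w. real (RM w)) =
     (\<Sum>x\<in>?A \<inter> ?E. (real (RM x) - 2)^2) / real (card (?A \<inter> ?E)) - ((\<Sum>x\<in>?A \<inter> ?E. real (RM x) - 2) / real (card (?A \<inter> ?E)))^2"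
    unfolding arr_pmf_def by (rule cond_var_set[OF finite_arr ne'])
  also have "\<dots> = (\<Sum>u\<in>arrangements (Suc b') a. (real (R1 u) - 1)^2) / real (card (arrangements (Suc b') a))
       - ((\<Sum>u\<in>arrangements (Suc b') a. real (R1 u) - 1) / real (card (arrangements (Suc b') a)))^2"
    unfolding S' by (simp add: sum.reindex[OF inj] card_image[OF inj] RM_YuY algebra_simps)
  also have "\<dots> = (\<Sum>u\<in>arrangements a (Suc b'). (real (R2 u) - 1)^2) / real (card (arrangements a (Suc b')))
       - ((\<Sum>u\<in>arrangements a (Suc b'). real (R2 u) - 1) / real (card (arrangements a (Suc b'))))^2"
    using sum_sw[where a="Suc b'" and b=a and h="\<lambda>j. (real j - 1)^2"] sum_sw[where a="Suc b'" and b=a and h="\<lambda>j. real j - 1"]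
      card_sw[of "Suc b'" a] by simp
  also have "\<dots> = real b' * (real b' + 1) * real a * (real a + 1) / ((real a + real b' + 1)^2 * (real a + real b'))"
    by (rule core_i) (use assms a b in auto)
  also have "\<dots> = real n1 * (real n1 - 1) * (real n2 - 2) * (real n2 - 1) / ((real (n1 + n2) - 2)^2 * (real (n1 + n2) - 3))"
    unfolding a b by (simp add: algebra_simps)
  finally show ?thesis .
qed


lemma part_iii:
  assumes "n1 \<ge> 1" "n2 \<ge> 1" "n1 + n2 > 3"
    and ne: "set_pmf (arr_pmf n1 n2) \<inter> {w. R1 w = R2 w} \<noteq> {}"
  shows "cond_var (arr_pmf n1 n2) {w. R1 w = R2 w} (\<lambda>w. real (RM w)) =
      (real n2 - 1)^2 * (real n1 - 1)^2 / ((real (n1 + n2) - 2)^2 * (real (n1 + n2) - 3))"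
proof -
  let ?A = "arrangements n1 n2" and ?E = "{w. R1 w = R2 w}" and ?P = "PX n1 n2"
  have ne': "?A \<inter> ?E \<noteq> {}" using ne by (simp add: set_arr_pmf)
  have S: "?A \<inter> ?E = ?P \<union> rev ` ?P" using set_iii assms by simp
  obtain a where a: "n1 = Suc a" using assms(1) by (cases n1) auto
  obtain b' where b: "n2 = Suc b'" using assms(2) by (cases n2) auto
  have fU: "finite (UY a (Suc b'))" using finite_arr[of a "Suc b'"] by (rule finite_subset[rotated]) (auto simp: UY_def)
  have P: "?P = (\<lambda>u. X # u) ` UY a (Suc b')" unfolding PX_def a b by simp
  have fP: "finite ?P" unfolding P using fU by simp
  have injr: "inj_on rev U" for U :: "sym list set" by (auto intro: inj_onI)
  have injX: "inj_on (\<lambda>u. X # u) U" for U :: "sym list set" by (auto intro: inj_onI)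
  have disj: "?P \<inter> rev ` ?P = {}" using PX_disj assms(1) by simp
  have sumP: "(\<Sum>w\<in>?A \<inter> ?E. h (RM w)) = 2 * (\<Sum>u\<in>UY a (Suc b'). h (R2 u))" for h :: "nat \<Rightarrow> real"
  proof -
    have "(\<Sum>w\<in>?A \<inter> ?E. h (RM w)) = (\<Sum>w\<in>?P. h (RM w)) + (\<Sum>w\<in>rev ` ?P. h (RM w))"
      unfolding S by (rule sum.union_disjoint[OF fP _ disj]) (use fP in simp)
    also have "(\<Sum>w\<in>rev ` ?P. h (RM w)) = (\<Sum>w\<in>?P. h (RM w))"
      by (simp add: sum.reindex[OF injr])
    also have "(\<Sum>w\<in>?P. h (RM w)) = (\<Sum>u\<in>UY a (Suc b'). h (R2 u))"
      unfolding P
    proof (subst sum.reindex[OF injX], rule sum.cong[OF refl])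
      fix u assume "u \<in> UY a (Suc b')"
      then have "u \<noteq> []" "last u = Y" by (auto simp: UY_def)
      then show "((\<lambda>w. h (RM w)) \<circ> (\<lambda>u. X # u)) u = h (R2 u)" using R_Xu[of u] by (simp add: RM_def)
    qed
    finally show ?thesis by simp
  qed
  have cardP: "card (?A \<inter> ?E) = 2 * card (UY a (Suc b'))"
  proof -
    have "card (?A \<inter> ?E) = card ?P + card (rev ` ?P)"
      unfolding S by (rule card_Un_disjoint[OF fP _ disj]) (use fP in simp)
    also have "\<dots> = 2 * card ?P" by (simp add: card_image[OF injr])
    also have "card ?P = card (UY a (Suc b'))" unfolding P by (simp add: card_image[OF injX])
    finally show ?thesis .
  qed
  have "cond_var (arr_pmf n1 n2) ?E (\<lambda>w. real (RM w)) =
     (\<Sum>x\<in>?A \<inter> ?E. (real (RM x) - 1)^2) / real (card (?A \<inter> ?E)) - ((\<Sum>x\<in>?A \<inter> ?E. real (RM x) - 1) / real (card (?A \<inter> ?E)))^2"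
    unfolding arr_pmf_def by (rule cond_var_set[OF finite_arr ne'])
  also have "\<dots> = (\<Sum>u\<in>UY a (Suc b'). (real (R2 u) - 1)^2) / real (card (UY a (Suc b')))
       - ((\<Sum>u\<in>UY a (Suc b'). real (R2 u) - 1) / real (card (UY a (Suc b'))))^2"
    using sumP[of "\<lambda>j. (real j - 1)^2"] sumP[of "\<lambda>j. real j - 1"] cardP by simp
  also have "\<dots> = (real b')^2 * (real a)^2 / ((real a + real b')^2 * (real a + real b' - 1))"
    by (rule core_iii) (use assms a b in auto)
  also have "\<dots> = (real n2 - 1)^2 * (real n1 - 1)^2 / ((real (n1 + n2) - 2)^2 * (real (n1 + n2) - 3))"
    unfolding a b by (simp add: algebra_simps)
  finally show ?thesis .
qed

theorem lemma3:
  fixes n1 n2 :: nat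
  assumes "n1 \<ge> 1" and "n2 \<ge> 1" and "n1 + n2 > 3"
  defines "n \<equiv> real (n1 + n2)"
  shows
   "(set_pmf (arr_pmf n1 n2) \<inter> {w. R1 w > R2 w} \<noteq> {} \<longrightarrow>
      cond_var (arr_pmf n1 n2) {w. R1 w > R2 w} (\<lambda>w. real (RM w)) =
      real n2 * (real n2 - 1) * (real n1 - 2) * (real n1 - 1) / ((n - 2)^2 * (n - 3)))
  \<and> (set_pmf (arr_pmf n1 n2) \<inter> {w. R1 w < R2 w} \<noteq> {} \<longrightarrow>
      cond_var (arr_pmf n1 n2) {w. R1 w < R2 w} (\<lambda>w. real (RM w)) =
      real n1 * (real n1 - 1) * (real n2 - 2) * (real n2 - 1) / ((n - 2)^2 * (n - 3)))
  \<and> (set_pmf (arr_pmf n1 n2) \<inter> {w. R1 w = R2 w} \<noteq> {} \<longrightarrow>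
      cond_var (arr_pmf n1 n2) {w. R1 w = R2 w} (\<lambda>w. real (RM w)) =
      (real n2 - 1)^2 * (real n1 - 1)^2 / ((n - 2)^2 * (n - 3)))"
  unfolding n_def using part_i[OF assms(1-3)] part_ii[OF assms(1-3)] part_iii[OF assms(1-3)] by blast

end
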